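(* Let $V$ be a complex Hermitian vector space of dimension $N$ with a fixed orthonormal basis $e_1,\ldots,e_N$. For $S\subset\{1,\ldots,N\}$ let $\mathcal L_S=\mathrm{span}\{e_i\}_{i\in S}$, and let $\mathcal L_S^*\subset\mathcal L_S$ be the set of vectors all of whose coordinates with respect to $\{e_i\}_{i\in S}$ are non-zero. Let $K,M$ be positive integers with $K\le N-M$. Then for any $w\in\mathcal L^*_{\{1,\ldots,K\}}$, a generic $M$-dimensional linear subspace $\mathcal L\in\mathrm{Gr}_w(M,V)$ satisfies: (1) $\mathcal L\cap\mathcal L_{\{1,\ldots,K\}}$ is the line spanned by $w$; (2) $\mathcal L\cap\mathcal L_S=\{0\}$ for every $S\subset\{1,\ldots,N\}$ with $|S|=K$ and $S\ne\{1,\ldots,K\}$.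
   Context: $\mathrm{Gr}_w(M,V)$ denotes the subvariety of the Grassmannian of $M$-dimensional linear subspaces of $V$ consisting of those subspaces containing $w$. "Generic" means: for all $\mathcal L$ outside a proper algebraic (Zariski-closed) subset of $\mathrm{Gr}_w(M,V)$. *)

theory Defs
  imports Complex_Main
begin

text \<open>Conventions. V = C^N is modelled as functions nat => complex supported on
  {0..<N}; the orthonormal basis e_1..e_N is the standard basis, with index i
  (paper) corresponding to index i-1 here.\<close>

definition inV :: "nat \<Rightarrow> (nat \<Rightarrow> complex) \<Rightarrow> bool" where
  "inV N x \<longleftrightarrow> (\<forall>i\<ge>N. x i = 0)"

definition coordsub :: "nat set \<Rightarrow> (nat \<Rightarrow> complex) set" where
  "coordsub S = {x. \<forall>i. i \<notin> S \<longrightarrow> x i = 0}"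

definition coordsub_star :: "nat set \<Rightarrow> (nat \<Rightarrow> complex) set" where
  "coordsub_star S = {x \<in> coordsub S. \<forall>i\<in>S. x i \<noteq> 0}"

definition lspan :: "(nat \<Rightarrow> nat \<Rightarrow> complex) \<Rightarrow> nat \<Rightarrow> (nat \<Rightarrow> complex) set" where
  "lspan F m = {x. \<exists>c::nat \<Rightarrow> complex. x = (\<lambda>i. \<Sum>j<m. c j * F j i)}"

definition lin_indep :: "(nat \<Rightarrow> nat \<Rightarrow> complex) \<Rightarrow> nat \<Rightarrow> bool" where
  "lin_indep F m \<longleftrightarrow>
     (\<forall>c::nat \<Rightarrow> complex. (\<lambda>i. \<Sum>j<m. c j * F j i) = (\<lambda>i. 0) \<longrightarrow> (\<forall>j<m. c j = 0))"

inductive polyfun :: "(((nat \<times> nat) \<Rightarrow> complex) \<Rightarrow> complex) \<Rightarrow> bool" where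
  pf_const: "polyfun (\<lambda>x. c)"
| pf_var: "polyfun (\<lambda>x. x v)"
| pf_add: "polyfun p \<Longrightarrow> polyfun q \<Longrightarrow> polyfun (\<lambda>x. p x + q x)"
| pf_mult: "polyfun p \<Longrightarrow> polyfun q \<Longrightarrow> polyfun (\<lambda>x. p x * q x)"

text \<open>Frame attached to parameters x: first vector w, then the M-1 vectors
  v_j = (x (j,i))_{i<N}.  Every L in Gr_w(M,V) is the span of such a frame.\<close>
definition frame :: "nat \<Rightarrow> (nat \<Rightarrow> complex) \<Rightarrow> ((nat \<times> nat) \<Rightarrow> complex) \<Rightarrow> nat \<Rightarrow> nat \<Rightarrow> complex" where
  "frame N w x j i = (if j = 0 then w i else if i < N then x (j - 1, i) else 0)"

end

theory Submission imports Defs "Jordan_Normal_Form.Determinant" "HOL-Computational_Algebra.Polynomial" begin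

lemma polyfun_line:
  assumes "polyfun P"
  shows "\<exists>p. \<forall>t. P (\<lambda>v. a v + t * (b v - a v)) = poly p t"
  using assms
proof (induction rule: polyfun.induct)
  case (pf_const c) then show ?case by (intro exI[of _ "[:c:]"]) simp
next
  case (pf_var v) then show ?case by (intro exI[of _ "[:a v, b v - a v:]"]) (simp add: algebra_simps)
next
  case (pf_add p q) then obtain p1 q1 where "\<forall>t. p (\<lambda>v. a v + t * (b v - a v)) = poly p1 t"
     "\<forall>t. q (\<lambda>v. a v + t * (b v - a v)) = poly q1 t" by blast
  then show ?case by (intro exI[of _ "p1 + q1"]) simp
next
  case (pf_mult p q) then obtain p1 q1 where "\<forall>t. p (\<lambda>v. a v + t * (b v - a v)) = poly p1 t"
     "\<forall>t. q (\<lambda>v. a v + t * (b v - a v)) = poly q1 t" by blast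
  then show ?case by (intro exI[of _ "p1 * q1"]) simp
qed

lemma polyfun_mult_nz:
  assumes "polyfun P" "polyfun Q" "P a \<noteq> 0" "Q b \<noteq> 0"
  shows "\<exists>x. P x * Q x \<noteq> 0"
proof -
  obtain p where p: "\<forall>t. P (\<lambda>v. a v + t * (b v - a v)) = poly p t" using polyfun_line[OF assms(1)] by blast
  obtain q where q: "\<forall>t. Q (\<lambda>v. a v + t * (b v - a v)) = poly q t" using polyfun_line[OF assms(2)] by blast
  have "poly p 0 \<noteq> 0" using p[rule_format, of 0] assms(3) by simp
  hence "p \<noteq> 0" by auto
  have "poly q 1 \<noteq> 0" using q[rule_format, of 1] assms(4) by simp
  hence "q \<noteq> 0" by auto
  hence "p * q \<noteq> 0" using \<open>p \<noteq> 0\<close> by simp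
  hence "finite {t. poly (p * q) t = 0}" by (rule poly_roots_finite)
  hence "\<exists>t. t \<notin> {t. poly (p * q) t = 0}"
    by (metis UNIV_I ex_new_if_finite infinite_UNIV_char_0)
  then obtain t where "poly (p * q) t \<noteq> 0" by auto
  thus ?thesis using p q by (intro exI[of _ "\<lambda>v. a v + t * (b v - a v)"]) simp
qed

lemma polyfun_sum: "finite A \<Longrightarrow> (\<And>s. s \<in> A \<Longrightarrow> polyfun (f s)) \<Longrightarrow> polyfun (\<lambda>x. \<Sum>s\<in>A. f s x)"
  by (induction A rule: finite_induct) (auto intro: polyfun.intros)

lemma polyfun_prod: "finite A \<Longrightarrow> (\<And>s. s \<in> A \<Longrightarrow> polyfun (f s)) \<Longrightarrow> polyfun (\<lambda>x. \<Prod>s\<in>A. f s x)"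
  by (induction A rule: finite_induct) (auto intro: polyfun.intros)

lemma polyfun_prod_nz:
  "finite A \<Longrightarrow> (\<And>s. s \<in> A \<Longrightarrow> polyfun (f s) \<and> (\<exists>x. f s x \<noteq> 0)) \<Longrightarrow> \<exists>x. (\<Prod>s\<in>A. f s x) \<noteq> 0"
proof (induction A rule: finite_induct)
  case empty then show ?case by simp
next
  case (insert s A)
  obtain a where "f s a \<noteq> 0" using insert by blast
  obtain b where "(\<Prod>s\<in>A. f s b) \<noteq> 0" using insert by blast
  moreover have "polyfun (\<lambda>x. \<Prod>s\<in>A. f s x)" using insert by (intro polyfun_prod) auto
  ultimately obtain x where "f s x * (\<Prod>s\<in>A. f s x) \<noteq> 0"
    using polyfun_mult_nz[of "f s" "\<lambda>x. \<Prod>s\<in>A. f s x"] insert by blast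
  thus ?case using insert by auto
qed

lemma polyfun_det:
  assumes "\<And>l j. polyfun (g l j)"
  shows "polyfun (\<lambda>x. det (mat n n (\<lambda>(l,j). g l j x)))"
proof -
  have "(\<lambda>x. det (mat n n (\<lambda>(l,j). g l j x))) =
    (\<lambda>x. \<Sum>p\<in>{p. p permutes {0..<n}}. signof p * (\<Prod>i\<in>{0..<n}. g i (p i) x))"
  proof
    fix x
    show "det (mat n n (\<lambda>(l,j). g l j x)) = (\<Sum>p\<in>{p. p permutes {0..<n}}. signof p * (\<Prod>i\<in>{0..<n}. g i (p i) x))"
      unfolding det_def
      by (auto intro!: sum.cong prod.cong simp: permutes_in_image)
  qed
  moreover have "polyfun (\<lambda>x. \<Sum>p\<in>{p. p permutes {0..<n}}. signof p * (\<Prod>i\<in>{0..<n}. g i (p i) x))"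
    by (intro polyfun_sum polyfun_prod polyfun.intros assms finite_permutations finite_atLeastLessThan)
  ultimately show ?thesis by simp
qed

lemma det_nz_iff:
  fixes g :: "nat \<Rightarrow> nat \<Rightarrow> complex"
  shows "det (mat n n (\<lambda>(l,j). g l j)) \<noteq> 0 \<longleftrightarrow>
    (\<forall>c. (\<forall>l<n. (\<Sum>j<n. g l j * c j) = 0) \<longrightarrow> (\<forall>j<n. c j = 0))"
proof -
  let ?A = "mat n n (\<lambda>(l,j). g l j)"
  have A: "?A \<in> carrier_mat n n" by simp
  have mv: "(?A *\<^sub>v vec n c) $ l = (\<Sum>j<n. g l j * c j)" if "l < n" for c l
    using that by (auto simp: mult_mat_vec_def scalar_prod_def lessThan_atLeast0 intro!: sum.cong)
  show ?thesis
  proof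
    assume d: "det ?A \<noteq> 0"
    show "\<forall>c. (\<forall>l<n. (\<Sum>j<n. g l j * c j) = 0) \<longrightarrow> (\<forall>j<n. c j = 0)"
    proof (intro allI impI)
      fix c j assume h: "\<forall>l<n. (\<Sum>j<n. g l j * c j) = 0" and j: "j < n"
      have "?A *\<^sub>v vec n c = 0\<^sub>v n" using h mv by (intro eq_vecI) auto
      hence "vec n c = 0\<^sub>v n" using d det_0_iff_vec_prod_zero[OF A] vec_carrier by blast
      thus "c j = 0" using j by (metis index_vec index_zero_vec(1))
    qed
  next
    assume h: "\<forall>c. (\<forall>l<n. (\<Sum>j<n. g l j * c j) = 0) \<longrightarrow> (\<forall>j<n. c j = 0)"
    show "det ?A \<noteq> 0"
    proof
      assume "det ?A = 0"
      then obtain v where v: "v \<in> carrier_vec n" "v \<noteq> 0\<^sub>v n" "?A *\<^sub>v v = 0\<^sub>v n"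
        using det_0_iff_vec_prod_zero[OF A] by auto
      have vv: "v = vec n (\<lambda>j. v $ j)" using v(1) by auto
      have "\<forall>l<n. (\<Sum>j<n. g l j * v $ j) = 0"
        using v(3) mv[of _ "\<lambda>j. v $ j"] vv by (metis index_zero_vec(1))
      hence "\<forall>j<n. v $ j = 0" using h by blast
      hence "v = 0\<^sub>v n" using v(1) by (intro eq_vecI) auto
      thus False using v(2) by simp
    qed
  qed
qed

lemma sum_if_aux:
  fixes a :: complex and c :: "nat \<Rightarrow> complex"
  assumes "l < n" "0 < n"
  shows "(\<Sum>j<n. (if j = 0 then a else if l = j then 1 else 0) * c j) = a * c 0 + (if l \<noteq> 0 then c l else 0)"
proof -
  have "(\<Sum>j<n. (if j = 0 then a else if l = j then 1 else 0) * c j) =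
        (\<Sum>j<n. (if j = 0 then a * c 0 else 0) + (if j = l \<and> l \<noteq> 0 then c l else 0))"
    by (intro sum.cong) auto
  also have "\<dots> = a * c 0 + (if l \<noteq> 0 then c l else 0)"
    using assms by (simp add: sum.distrib sum.delta' sum.If_cases)
  finally show ?thesis .
qed

lemma factorA:
  assumes dist: "distinct ts" and len: "length ts = M" and disj: "set ts \<inter> S = {}"
    and t0: "ts ! 0 = k" and wk: "w k \<noteq> 0" and tsN: "set ts \<subseteq> {0..<N}" and M: "0 < M"
  shows "polyfun (\<lambda>x. det (mat M M (\<lambda>(l,j). frame N w x j (ts ! l))))"
    and "\<exists>x. det (mat M M (\<lambda>(l,j). frame N w x j (ts ! l))) \<noteq> 0"
    and "\<And>x. det (mat M M (\<lambda>(l,j). frame N w x j (ts ! l))) \<noteq> 0 \<Longrightarrow>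
          lspan (frame N w x) M \<inter> coordsub S = {\<lambda>i. 0}"
proof -
  show "polyfun (\<lambda>x. det (mat M M (\<lambda>(l,j). frame N w x j (ts ! l))))"
  proof (rule polyfun_det)
    fix l j
    show "polyfun (\<lambda>x. frame N w x j (ts ! l))"
      unfolding frame_def by (cases "j = 0"; cases "ts ! l < N") (auto intro: polyfun.intros)
  qed
next
  define x0 where "x0 = (\<lambda>(j,i). if i = ts ! (Suc j) then 1 else (0::complex))"
  have fr: "frame N w x0 j (ts ! l) = (if j = 0 then w (ts ! l) else if l = j then 1 else 0)"
    if "l < M" "j < M" for l j
  proof -
    have "ts ! l < N" using tsN that len by (meson atLeastLessThan_iff nth_mem subsetD)
    moreover have "(ts ! l = ts ! j) = (l = j)" using dist that len by (simp add: nth_eq_iff_index_eq)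
    ultimately show ?thesis using that unfolding frame_def x0_def by auto
  qed
  have "det (mat M M (\<lambda>(l,j). frame N w x0 j (ts ! l))) \<noteq> 0"
    unfolding det_nz_iff
  proof (intro allI impI)
    fix c j assume h: "\<forall>l<M. (\<Sum>j<M. frame N w x0 j (ts ! l) * c j) = 0" and j: "j < M"
    have h2: "w (ts ! l) * c 0 + (if l \<noteq> 0 then c l else 0) = 0" if "l < M" for l
    proof -
      have "(\<Sum>j<M. frame N w x0 j (ts ! l) * c j) = (\<Sum>j<M. (if j = 0 then w (ts ! l) else if l = j then 1 else 0) * c j)"
        using fr that by (intro sum.cong) auto
      thus ?thesis using h that sum_if_aux[OF that M] by simp
    qed
    have c0: "c 0 = 0" using h2[OF M] t0 wk by simp
    show "c j = 0"
    proof (cases "j = 0")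
      case True thus ?thesis using c0 by simp
    next
      case False thus ?thesis using h2[OF j] c0 by simp
    qed
  qed
  thus "\<exists>x. det (mat M M (\<lambda>(l,j). frame N w x j (ts ! l))) \<noteq> 0" by blast
next
  fix x assume d: "det (mat M M (\<lambda>(l,j). frame N w x j (ts ! l))) \<noteq> 0"
  show "lspan (frame N w x) M \<inter> coordsub S = {\<lambda>i. 0}"
  proof
    show "{\<lambda>i. 0} \<subseteq> lspan (frame N w x) M \<inter> coordsub S"
      unfolding lspan_def coordsub_def by (auto intro!: exI[of _ "\<lambda>_. 0"])
  next
    show "lspan (frame N w x) M \<inter> coordsub S \<subseteq> {\<lambda>i. 0}"
    proof
      fix y assume "y \<in> lspan (frame N w x) M \<inter> coordsub S"
      then obtain c where y: "y = (\<lambda>i. \<Sum>j<M. c j * frame N w x j i)" and yS: "\<forall>i. i \<notin> S \<longrightarrow> y i = 0"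
        unfolding lspan_def coordsub_def by auto
      have "\<forall>l<M. (\<Sum>j<M. frame N w x j (ts ! l) * c j) = 0"
      proof (intro allI impI)
        fix l assume "l < M"
        hence "ts ! l \<notin> S" using disj len by (metis disjoint_iff nth_mem)
        hence "y (ts ! l) = 0" using yS by simp
        thus "(\<Sum>j<M. frame N w x j (ts ! l) * c j) = 0" using y by (simp add: mult.commute)
      qed
      hence "\<forall>j<M. c j = 0" using d unfolding det_nz_iff by blast
      hence "y = (\<lambda>i. 0)" using y by auto
      thus "y \<in> {\<lambda>i. 0}" by simp
    qed
  qed
qed

lemma factorB:
  fixes ss :: "nat list" and K N m :: nat and w :: "nat \<Rightarrow> complex"
  assumes dist: "distinct ss" and len: "length ss = m" and ssr: "set ss \<subseteq> {K..<N}"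
    and w: "w \<in> coordsub_star {0..<K}" and K: "0 < K"
  shows "polyfun (\<lambda>x::(nat\<times>nat)\<Rightarrow>complex. det (mat m m (\<lambda>(l,j). x (j, ss ! l))))"
    and "\<exists>x::(nat\<times>nat)\<Rightarrow>complex. det (mat m m (\<lambda>(l,j). x (j, ss ! l))) \<noteq> 0"
    and "\<And>x. det (mat m m (\<lambda>(l,j). x (j, ss ! l))) \<noteq> 0 \<Longrightarrow>
          lin_indep (frame N w x) (Suc m) \<and>
          lspan (frame N w x) (Suc m) \<inter> coordsub {0..<K} = {y. \<exists>c::complex. y = (\<lambda>i. c * w i)}"
proof -
  show "polyfun (\<lambda>x::(nat\<times>nat)\<Rightarrow>complex. det (mat m m (\<lambda>(l,j). x (j, ss ! l))))"
    by (rule polyfun_det) (rule pf_var)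
next
  define x0 where "x0 = (\<lambda>(j,i). if i = ss ! j then 1 else (0::complex))"
  have "det (mat m m (\<lambda>(l,j). x0 (j, ss ! l))) \<noteq> 0"
    unfolding det_nz_iff
  proof (intro allI impI)
    fix c j assume h: "\<forall>l<m. (\<Sum>j<m. x0 (j, ss ! l) * c j) = 0" and j: "j < m"
    have "(\<Sum>i<m. x0 (i, ss ! j) * c i) = (\<Sum>i<m. if i = j then c j else 0)"
      using dist len j by (intro sum.cong) (auto simp: x0_def nth_eq_iff_index_eq)
    also have "\<dots> = c j" using j by simp
    finally show "c j = 0" using h j by simp
  qed
  thus "\<exists>x::(nat\<times>nat)\<Rightarrow>complex. det (mat m m (\<lambda>(l,j). x (j, ss ! l))) \<noteq> 0" by (intro exI[of _ x0])
next
  fix x :: "(nat\<times>nat)\<Rightarrow>complex" assume d: "det (mat m m (\<lambda>(l,j). x (j, ss ! l))) \<noteq> 0"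
  have wK: "\<And>i. i \<ge> K \<Longrightarrow> w i = 0" using w unfolding coordsub_star_def coordsub_def by auto
  have w0: "w 0 \<noteq> 0" using w K unfolding coordsub_star_def by auto
  have split: "(\<Sum>j<Suc m. c j * frame N w x j i) = c 0 * w i + (\<Sum>j<m. c (Suc j) * x (j, i))"
    if "i < N" for c i
    using that unfolding sum.lessThan_Suc_shift by (simp add: frame_def)
  have C: "\<forall>j<m. c (Suc j) = 0"
    if "(\<lambda>i. \<Sum>j<Suc m. c j * frame N w x j i) \<in> coordsub {0..<K}" for c
  proof -
    have "\<forall>l<m. (\<Sum>j<m. x (j, ss ! l) * c (Suc j)) = 0"
    proof (intro allI impI)
      fix l assume l: "l < m"
      hence i: "ss ! l \<in> {K..<N}" using ssr len nth_mem by blast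
      have h0: "\<forall>i. i \<notin> {0..<K} \<longrightarrow> (\<Sum>j<Suc m. c j * frame N w x j i) = 0"
        using that unfolding coordsub_def by simp
      have i1: "ss ! l \<notin> {0..<K}" "ss ! l < N" "K \<le> ss ! l" using i by auto
      have "(\<Sum>j<Suc m. c j * frame N w x j (ss ! l)) = 0" using h0 i1(1) by blast
      hence "c 0 * w (ss ! l) + (\<Sum>j<m. c (Suc j) * x (j, ss ! l)) = 0"
        using split[OF i1(2), of c] by simp
      hence "(\<Sum>j<m. c (Suc j) * x (j, ss ! l)) = 0" using wK[OF i1(3)] by simp
      moreover have "(\<Sum>j<m. x (j, ss ! l) * c (Suc j)) = (\<Sum>j<m. c (Suc j) * x (j, ss ! l))"
        by (simp add: mult_ac)
      ultimately show "(\<Sum>j<m. x (j, ss ! l) * c (Suc j)) = 0" by simp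
    qed
    note h1 = this
    have H: "\<forall>c'. (\<forall>l<m. (\<Sum>j<m. x (j, ss ! l) * c' j) = 0) \<longrightarrow> (\<forall>j<m. c' j = 0)"
      using d det_nz_iff[of m "\<lambda>l j. x (j, ss ! l)"] by simp
    show ?thesis using spec[OF H, of "\<lambda>j. c (Suc j)"] h1 by simp
  qed
  have C2: "(\<lambda>i. \<Sum>j<Suc m. c j * frame N w x j i) = (\<lambda>i. c 0 * w i)"
    if "(\<lambda>i. \<Sum>j<Suc m. c j * frame N w x j i) \<in> coordsub {0..<K}" for c
    using C[OF that] unfolding sum.lessThan_Suc_shift by (simp add: frame_def)
  show "lin_indep (frame N w x) (Suc m) \<and>
          lspan (frame N w x) (Suc m) \<inter> coordsub {0..<K} = {y. \<exists>c::complex. y = (\<lambda>i. c * w i)}"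
  proof (intro conjI)
    show "lin_indep (frame N w x) (Suc m)"
      unfolding lin_indep_def
    proof (intro allI impI)
      fix c j assume h: "(\<lambda>i. \<Sum>j<Suc m. c j * frame N w x j i) = (\<lambda>i. 0)" and j: "j < Suc m"
      have mem: "(\<lambda>i. \<Sum>j<Suc m. c j * frame N w x j i) \<in> coordsub {0..<K}"
        unfolding h coordsub_def by simp
      have "(\<lambda>i. c 0 * w i) = (\<lambda>i. 0)" using C2[OF mem] h by simp
      hence "c 0 * w 0 = 0" by meson
      hence c0: "c 0 = 0" using w0 by simp
      show "c j = 0"
      proof (cases j)
        case 0 thus ?thesis using c0 by simp
      next
        case (Suc j') thus ?thesis using C[OF mem] j by simp
      qed
    qed
  next
    show "lspan (frame N w x) (Suc m) \<inter> coordsub {0..<K} = {y. \<exists>c::complex. y = (\<lambda>i. c * w i)}"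
    proof
      show "lspan (frame N w x) (Suc m) \<inter> coordsub {0..<K} \<subseteq> {y. \<exists>c::complex. y = (\<lambda>i. c * w i)}"
      proof
        fix y assume "y \<in> lspan (frame N w x) (Suc m) \<inter> coordsub {0..<K}"
        then obtain c where y: "y = (\<lambda>i. \<Sum>j<Suc m. c j * frame N w x j i)" and yK: "y \<in> coordsub {0..<K}"
          unfolding lspan_def by auto
        show "y \<in> {y. \<exists>c::complex. y = (\<lambda>i. c * w i)}" using C2 y yK by auto
      qed
    next
      show "{y. \<exists>c::complex. y = (\<lambda>i. c * w i)} \<subseteq> lspan (frame N w x) (Suc m) \<inter> coordsub {0..<K}"
      proof
        fix y assume "y \<in> {y. \<exists>c::complex. y = (\<lambda>i. c * w i)}"
        then obtain a where y: "y = (\<lambda>i. a * w i)" by auto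
        have "y = (\<lambda>i. \<Sum>j<Suc m. (if j = 0 then a else 0) * frame N w x j i)"
          unfolding y sum.lessThan_Suc_shift by (simp add: frame_def)
        hence "\<exists>c. y = (\<lambda>i. \<Sum>j<Suc m. c j * frame N w x j i)"
          by (rule exI[of _ "\<lambda>j. if j = 0 then a else 0"])
        hence "y \<in> lspan (frame N w x) (Suc m)" unfolding lspan_def by simp
        moreover have "y \<in> coordsub {0..<K}" using w wK unfolding y coordsub_def by auto
        ultimately show "y \<in> lspan (frame N w x) (Suc m) \<inter> coordsub {0..<K}" by blast
      qed
    qed
  qed
qed

theorem lemma3p8:
  fixes N K M :: nat and w :: "nat \<Rightarrow> complex"
  assumes "0 < K" and "0 < M" and "K \<le> N - M"
    and "w \<in> coordsub_star {0..<K}"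
  shows "\<exists>P. polyfun P \<and> (\<exists>x. P x \<noteq> 0) \<and>
    (\<forall>x. P x \<noteq> 0 \<longrightarrow>
       (let L = lspan (frame N w x) M in
          lin_indep (frame N w x) M \<and>
          L \<inter> coordsub {0..<K} = {y. \<exists>c::complex. y = (\<lambda>i. c * w i)} \<and>
          (\<forall>S. S \<subseteq> {0..<N} \<and> card S = K \<and> S \<noteq> {0..<K} \<longrightarrow>
               L \<inter> coordsub S = {\<lambda>i. 0})))"
proof -
  obtain m where Mm: "M = Suc m" using assms(2) gr0_implies_Suc by blast
  have w: "w \<in> coordsub_star {0..<K}" by fact
  have wnz: "\<And>k. k < K \<Longrightarrow> w k \<noteq> 0" using w unfolding coordsub_star_def by auto
  define SS where "SS = {S. S \<subseteq> {0..<N} \<and> card S = K \<and> S \<noteq> {0..<K}}"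
  have finSS: "finite SS" unfolding SS_def
    by (rule finite_subset[of _ "Pow {0..<N}"]) auto
  have KN: "K + M \<le> N" using assms(1,2,3) by linarith
  have exts: "\<exists>ts. distinct ts \<and> length ts = M \<and> set ts \<inter> S = {} \<and> ts ! 0 < K \<and> set ts \<subseteq> {0..<N}"
    if "S \<in> SS" for S
  proof -
    have S: "S \<subseteq> {0..<N}" "card S = K" "S \<noteq> {0..<K}" using that unfolding SS_def by auto
    have finS: "finite S" using S(1) finite_subset by blast
    have "\<not> {0..<K} \<subseteq> S"
    proof
      assume "{0..<K} \<subseteq> S"
      hence "{0..<K} = S" using finS S(2) by (intro card_subset_eq) auto
      thus False using S(3) by simp
    qed
    then obtain k where k: "k < K" "k \<notin> S" unfolding subset_iff by auto
    have cC: "card ({0..<N} - S) = N - K" using S finS by (simp add: card_Diff_subset)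
    have kC: "k \<in> {0..<N} - S" using k KN by auto
    have "card ({0..<N} - S - {k}) = N - K - 1" using cC kC by simp
    hence "m \<le> card ({0..<N} - S - {k})" using KN Mm by simp
    then obtain D where D: "D \<subseteq> {0..<N} - S - {k}" "card D = m"
      by (meson obtain_subset_with_card_n)
    have finD: "finite D" using D(1) finite_subset by blast
    let ?ts = "k # sorted_list_of_set D"
    show ?thesis
      using D finD k kC Mm by (intro exI[of _ ?ts]) auto
  qed
  obtain ts where ts: "\<And>S. S \<in> SS \<Longrightarrow> distinct (ts S) \<and> length (ts S) = M \<and> set (ts S) \<inter> S = {} \<and>
      ts S ! 0 < K \<and> set (ts S) \<subseteq> {0..<N}"
    using exts by metis
  have "m \<le> card {K..<N}" using KN Mm by simp
  then obtain D0 where D0: "D0 \<subseteq> {K..<N}" "card D0 = m" by (meson obtain_subset_with_card_n)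
  have finD0: "finite D0" using D0(1) finite_subset by blast
  define ss where "ss = sorted_list_of_set D0"
  have ss: "distinct ss" "length ss = m" "set ss \<subseteq> {K..<N}" using D0 finD0 unfolding ss_def by auto
  define PS where "PS = (\<lambda>S x. det (mat M M (\<lambda>(l,j). frame N w x j (ts S ! l))))"
  define P0 where "P0 = (\<lambda>x::(nat\<times>nat)\<Rightarrow>complex. det (mat m m (\<lambda>(l,j). x (j, ss ! l))))"
  define P where "P = (\<lambda>x. \<Prod>S\<in>insert None (Some ` SS). (case S of None \<Rightarrow> P0 x | Some S' \<Rightarrow> PS S' x))"
  have facs: "polyfun (\<lambda>x. case S of None \<Rightarrow> P0 x | Some S' \<Rightarrow> PS S' x) \<and>
      (\<exists>x. (case S of None \<Rightarrow> P0 x | Some S' \<Rightarrow> PS S' x) \<noteq> 0)"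
    if "S \<in> insert None (Some ` SS)" for S
  proof (cases S)
    case None thus ?thesis using factorB(1,2)[OF ss w assms(1)] unfolding P0_def by simp
  next
    case (Some S')
    hence S': "S' \<in> SS" using that by auto
    have t: "distinct (ts S') \<and> length (ts S') = M \<and> set (ts S') \<inter> S' = {} \<and>
      ts S' ! 0 < K \<and> set (ts S') \<subseteq> {0..<N}" using ts[OF S'] .
    have A1: "polyfun (PS S')" "\<exists>x. PS S' x \<noteq> 0" unfolding PS_def
      using factorA(1,2)[of "ts S'" M S' "ts S' ! 0" w N, OF _ _ _ refl wnz _ assms(2)] t by auto
    show ?thesis using A1 Some by simp
  qed
  have finI: "finite (insert None (Some ` SS))" using finSS by simp
  show ?thesis
  proof (intro exI[of _ P] conjI allI impI)
    show "polyfun P" unfolding P_def using facs finI by (intro polyfun_prod) auto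
    show "\<exists>x. P x \<noteq> 0" unfolding P_def using facs finI by (intro polyfun_prod_nz) auto
  next
    fix x assume Px: "P x \<noteq> 0"
    have nz: "(case S of None \<Rightarrow> P0 x | Some S' \<Rightarrow> PS S' x) \<noteq> 0" if "S \<in> insert None (Some ` SS)" for S
      using Px finI that unfolding P_def by (cases S) (auto simp: prod_zero_iff)
    have B: "lin_indep (frame N w x) (Suc m) \<and>
          lspan (frame N w x) (Suc m) \<inter> coordsub {0..<K} = {y. \<exists>c::complex. y = (\<lambda>i. c * w i)}"
      using factorB(3)[OF ss w assms(1)] nz[of None] unfolding P0_def by simp
    have A: "lspan (frame N w x) M \<inter> coordsub S = {\<lambda>i. 0}"
      if "S \<subseteq> {0..<N} \<and> card S = K \<and> S \<noteq> {0..<K}" for S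
    proof -
      have S: "S \<in> SS" using that unfolding SS_def by simp
      show ?thesis
        using factorA(3)[of "ts S" M S "ts S ! 0" w N x, OF _ _ _ refl wnz _ assms(2)] ts[OF S]
          nz[of "Some S"] S unfolding PS_def by simp
    qed
    show "let L = lspan (frame N w x) M in
          lin_indep (frame N w x) M \<and>
          L \<inter> coordsub {0..<K} = {y. \<exists>c::complex. y = (\<lambda>i. c * w i)} \<and>
          (\<forall>S. S \<subseteq> {0..<N} \<and> card S = K \<and> S \<noteq> {0..<K} \<longrightarrow>
               L \<inter> coordsub S = {\<lambda>i. 0})"
      using A B Mm by (simp add: Let_def)
  qed
qed

end
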